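(* Let $\alpha,g_0,\lambda,\kappa_0,\omega>0$, let $k>l\ge0$ be integers and put $n=k-l$. For $\Delta\tau>0$ and real $b\neq b'$ define $$I_{kl}(b,b')=\frac{1}{\kappa_0\pi}\int_{-\infty}^{\infty}e^{-i\alpha g_0\Delta\tau\,\omega n\, q}\,\frac{\sin[\kappa_0(q-\frac{2\lambda b}{\alpha g_0\Delta\tau})]}{q-\frac{2\lambda b}{\alpha g_0\Delta\tau}}\,\frac{\sin[\kappa_0(q-\frac{2\lambda b'}{\alpha g_0\Delta\tau})]}{q-\frac{2\lambda b'}{\alpha g_0\Delta\tau}}\,dq.$$ Then $$I_{kl}(b,b')=\frac{i\alpha g_0\Delta\tau}{4\lambda\kappa_0}\,V_{kl}(b,b')\,\Theta(2\kappa_0-\omega\alpha g_0 n\Delta\tau),$$ $$V_{kl}(b,b')=\frac{e^{-2i\lambda\left[\frac{\kappa_0}{\alpha g_0\Delta\tau}(b-b')+\omega n b'\right]}-e^{2i\lambda\left[\frac{\kappa_0}{\alpha g_0\Delta\tau}(b-b')-\omega n b\right]}}{b-b'},$$ with $\Theta$ the Heaviside step function, and $V_{kl}=0$ at $\Delta\tau=2\kappa_0/(\alpha g_0\omega n)$. Consequently all decoherence factors with $k\neq l$ vanish for $\Delta\tau\ge\frac{2\kappa_0}{\alpha g_0\omega}$.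
   Context: This is the decoherence factor for measuring the energy of a quantum harmonic oscillator (eigenvalues $(k+\tfrac12)\hbar\omega$) with probe initial state $\frac{1}{\sqrt{\kappa_0\pi}}\frac{\sin(\kappa_0 q)}{q}$; the factors with $k<l$ are the complex conjugates $I_{lk}=\overline{I_{kl}}$. *)

theory Defs
  imports "HOL-Analysis.Analysis"
begin

text \<open>Heaviside step function (value at 0 is irrelevant for the theorem, since V vanishes there).\<close>
definition heaviside :: "real \<Rightarrow> real" where
  "heaviside x = (if x \<ge> 0 then 1 else 0)"

definition decoh_integrand ::
  "real \<Rightarrow> real \<Rightarrow> real \<Rightarrow> real \<Rightarrow> real \<Rightarrow> int \<Rightarrow> real \<Rightarrow> real \<Rightarrow> real \<Rightarrow> real \<Rightarrow> complex" where
  "decoh_integrand \<alpha> g0 lam \<kappa>0 \<omega> n d\<tau> b b' q =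
     (let c = 2 * lam * b / (\<alpha> * g0 * d\<tau>); c' = 2 * lam * b' / (\<alpha> * g0 * d\<tau>) in
      complex_of_real (1 / (\<kappa>0 * pi)) *
      exp (- \<i> * complex_of_real (\<alpha> * g0 * d\<tau> * \<omega> * real_of_int n * q)) *
      complex_of_real ((sin (\<kappa>0 * (q - c)) / (q - c)) * (sin (\<kappa>0 * (q - c')) / (q - c'))))"

text \<open>Decoherence factor I_kl(b,b'); with n = k - l (possibly negative) this automatically
  satisfies I_lk = conj I_kl.\<close>
definition decoh_factor ::
  "real \<Rightarrow> real \<Rightarrow> real \<Rightarrow> real \<Rightarrow> real \<Rightarrow> nat \<Rightarrow> nat \<Rightarrow> real \<Rightarrow> real \<Rightarrow> real \<Rightarrow> complex" where
  "decoh_factor \<alpha> g0 lam \<kappa>0 \<omega> k l d\<tau> b b' =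
     integral UNIV (decoh_integrand \<alpha> g0 lam \<kappa>0 \<omega> (int k - int l) d\<tau> b b')"

definition V_kl ::
  "real \<Rightarrow> real \<Rightarrow> real \<Rightarrow> real \<Rightarrow> real \<Rightarrow> int \<Rightarrow> real \<Rightarrow> real \<Rightarrow> real \<Rightarrow> complex" where
  "V_kl \<alpha> g0 lam \<kappa>0 \<omega> n d\<tau> b b' =
     (exp (- 2 * \<i> * complex_of_real (lam * (\<kappa>0 / (\<alpha> * g0 * d\<tau>) * (b - b') + \<omega> * real_of_int n * b')))
      - exp (2 * \<i> * complex_of_real (lam * (\<kappa>0 / (\<alpha> * g0 * d\<tau>) * (b - b') - \<omega> * real_of_int n * b))))
     / complex_of_real (b - b')"

end

theory Submission
  imports Defs "HOL-Probability.Sinc_Integral"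
begin


lemma Si_0: "Si 0 = 0"
  using Si_neg[of 0] by simp

lemma Si_odd: "Si (- x) = - Si x"
proof (cases "x \<ge> 0")
  case True then show ?thesis by (rule Si_neg)
next
  case False then have "Si (- (-x)) = - Si (-x)" by (intro Si_neg) auto
  then show ?thesis by simp
qed

lemma Si_at_bot: "(Si \<longlongrightarrow> - (pi / 2)) at_bot"
proof -
  have "((\<lambda>x. - Si x) \<longlongrightarrow> - (pi/2)) at_top" by (intro tendsto_intros Si_at_top)
  then have "((\<lambda>x. Si (-x)) \<longlongrightarrow> - (pi/2)) at_top" by (simp add: Si_odd)
  then show ?thesis by (simp add: filterlim_at_bot_mirror)
qed

lemma Si_scale_top: "((\<lambda>y. Si (\<mu> * y)) \<longlongrightarrow> pi / 2 * sgn \<mu>) at_top"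
proof (cases "\<mu> > 0")
  case True
  have "filterlim (\<lambda>y. \<mu> * y) at_top at_top"
    using True by (intro filterlim_tendsto_pos_mult_at_top[OF tendsto_const]) (auto simp: filterlim_ident)
  from filterlim_compose[OF Si_at_top this] True show ?thesis by simp
next
  case False
  show ?thesis
  proof (cases "\<mu> = 0")
    case True then show ?thesis by (simp add: Si_0)
  next
    case F2: False
    with False have m: "\<mu> < 0" by simp
    have "filterlim (\<lambda>y. (-\<mu>) * y) at_top at_top"
      using m by (intro filterlim_tendsto_pos_mult_at_top[OF tendsto_const]) (auto simp: filterlim_ident)
    then have "filterlim (\<lambda>y. \<mu> * y) at_bot at_top"
      by (simp add: filterlim_uminus_at_top)
    from filterlim_compose[OF Si_at_bot this] m show ?thesis by simp
  qed
qed

lemma Si_scale_bot: "((\<lambda>y. Si (\<mu> * y)) \<longlongrightarrow> - (pi / 2 * sgn \<mu>)) at_bot"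
proof -
  have "((\<lambda>y. Si ((-\<mu>) * y)) \<longlongrightarrow> pi / 2 * sgn (-\<mu>)) at_top"
    by (rule Si_scale_top)
  then have "((\<lambda>y. Si (\<mu> * (- y))) \<longlongrightarrow> - (pi / 2 * sgn \<mu>)) at_top"
    by (simp add: sgn_minus)
  then show ?thesis by (simp add: filterlim_at_bot_mirror)
qed



lemma odd_sym:
  fixes u :: "real \<Rightarrow> real"
  assumes odd: "\<And>x. u (-x) = - u x"
  shows "integral {-a..a} u = 0"
proof -
  have "integral {-a..-(-a)} (\<lambda>x. u (-x)) = integral {-a..a} u"
    by (rule Henstock_Kurzweil_Integration.integral_reflect_real)
  then have "integral {-a..a} (\<lambda>x. - u x) = integral {-a..a} u" by (simp add: odd)
  then show ?thesis by simp
qed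

lemma odd_window_pos:
  fixes u :: "real \<Rightarrow> real"
  assumes odd: "\<And>x. u (-x) = - u x" and cont: "continuous_on UNIV u"
    and bnd: "\<And>x. x \<noteq> 0 \<Longrightarrow> \<bar>u x\<bar> \<le> M / \<bar>x\<bar>"
    and s: "s \<ge> 0" and R: "R > s"
  shows "\<bar>integral {-R+s..R+s} u\<bar> \<le> M / (R - s) * (2 * s)"
proof -
  have M: "M \<ge> 0" using bnd[of 1] by simp
  have int: "u integrable_on {a..b}" for a b
    by (rule integrable_continuous_real) (rule continuous_on_subset[OF cont], simp)
  have "integral {-R+s..R-s} u + integral {R-s..R+s} u = integral {-R+s..R+s} u"
    using s R by (intro Henstock_Kurzweil_Integration.integral_combine int) auto
  moreover have "integral {-R+s..R-s} u = 0"
    using odd_sym[of u "R-s", OF odd] by simp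
  moreover have "norm (integral {R-s..R+s} u) \<le> M / (R - s) * (2 * s)"
  proof -
    have "norm (integral {R-s..R+s} u) \<le> M / (R - s) * Henstock_Kurzweil_Integration.content {R-s..R+s}"
    proof (rule has_integral_bound_real[where S="{}"])
      show "0 \<le> M / (R - s)" using M R by simp
      show "(u has_integral integral {R - s..R + s} u) {R - s..R + s}" using int by blast
      fix x assume x: "x \<in> {R - s..R + s} - {}"
      then have xp: "x \<ge> R - s" "R - s > 0" using R by auto
      then have "\<bar>u x\<bar> \<le> M / \<bar>x\<bar>" using bnd[of x] by auto
      also have "\<dots> \<le> M / (R - s)" using xp M by (auto intro: divide_left_mono)
      finally show "norm (u x) \<le> M / (R - s)" by simp
    qed simp
    then show ?thesis using s by simp
  qed
  ultimately show ?thesis using s R by simp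
qed

lemma odd_window:
  fixes u :: "real \<Rightarrow> real"
  assumes odd: "\<And>x. u (-x) = - u x" and cont: "continuous_on UNIV u"
    and bnd: "\<And>x. x \<noteq> 0 \<Longrightarrow> \<bar>u x\<bar> \<le> M / \<bar>x\<bar>"
  shows "((\<lambda>R. integral {-R..R} (\<lambda>q. u (q - p))) \<longlongrightarrow> 0) at_top"
proof (rule Lim_null_comparison)
  let ?s = "\<bar>p\<bar>"
  have shift: "integral {-R..R} (\<lambda>q. u (q - p)) = integral {-R+(-p)..R+(-p)} u" for R
    using integral_shift_real_ivl[of "-R-p" "-p" "R-p" u] by simp
  have refl: "integral {-R+s..R+s} u = - integral {-R+(-s)..R+(-s)} u" for R s
  proof -
    have "integral {-(R-s)..-(-R-s)} (\<lambda>x. u (-x)) = integral {-R-s..R-s} u"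
      by (rule Henstock_Kurzweil_Integration.integral_reflect_real)
    then show ?thesis by (simp add: odd add.commute)
  qed
  have "\<bar>integral {-R..R} (\<lambda>q. u (q - p))\<bar> \<le> M / (R - ?s) * (2 * ?s)" if "R > ?s" for R
  proof (cases "p \<le> 0")
    case True
    then show ?thesis using odd_window_pos[OF odd cont bnd, of "-p" R] that by (simp add: shift)
  next
    case False
    have e: "integral {-R-p..R-p} u = - integral {-R+p..R+p} u" using refl[of R "-p"] by simp
    show ?thesis using odd_window_pos[OF odd cont bnd, of "p" R] that False
      by (simp add: shift e)
  qed
  then show "\<forall>\<^sub>F R in at_top. norm (integral {-R..R} (\<lambda>q. u (q - p))) \<le> M / (R - ?s) * (2 * ?s)"
    using eventually_gt_at_top[of ?s] by (metis (mono_tags, lifting) eventually_mono real_norm_def)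
  have "((\<lambda>R. M / (R - ?s)) \<longlongrightarrow> 0) at_top"
  proof (intro tendsto_divide_0[OF tendsto_const] filterlim_at_top_imp_at_infinity)
    have "LIM R at_top. (- ?s) + R :> at_top"
      by (rule filterlim_tendsto_add_at_top[OF tendsto_const filterlim_ident])
    then show "LIM R at_top. R - ?s :> at_top" by simp
  qed
  then show "((\<lambda>R. M / (R - ?s) * (2 * ?s)) \<longlongrightarrow> 0) at_top"
    using tendsto_mult_left_zero by blast
qed

lemma sin_window:
  assumes "a \<le> b"
  shows "((\<lambda>q. sin (\<mu> * (q - p)) / (q - p)) has_integral (Si (\<mu> * (b - p)) - Si (\<mu> * (a - p)))) {a..b}"
proof (rule fundamental_theorem_of_calculus_interior_strong[where S="{p}"])
  show "continuous_on {a..b} (\<lambda>q. Si (\<mu> * (q - p)))"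
    by (intro continuous_at_imp_continuous_on ballI continuous_within_compose3[OF isCont_Si]) 
       (auto intro!: continuous_intros)
  fix x assume x: "x \<in> {a<..<b} - {p}"
  have d: "((\<lambda>q. Si (\<mu> * (q - p))) has_real_derivative sinc (\<mu> * (x - p)) * (\<mu> * 1)) (at x)"
    by (rule DERIV_chain2[OF DERIV_Si]) (auto intro!: derivative_eq_intros)
  have "sinc (\<mu> * (x - p)) * (\<mu> * 1) = sin (\<mu> * (x - p)) / (x - p)"
    using x by auto
  with d show "((\<lambda>q. Si (\<mu> * (q - p))) has_vector_derivative sin (\<mu> * (x - p)) / (x - p)) (at x)"
    by (simp add: has_real_derivative_iff_has_vector_derivative)
qed (use assms in auto)



definition hk :: "real \<Rightarrow> real \<Rightarrow> complex" where
  "hk \<mu> x = (exp (\<i> * complex_of_real (\<mu> * x)) - 1) / complex_of_real x"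

definition uc :: "real \<Rightarrow> real \<Rightarrow> real" where
  "uc \<mu> x = - \<mu> * sin (\<mu> * x / 2) * sinc (\<mu> * x / 2)"

lemma exp_i_real: "exp (\<i> * complex_of_real y) = complex_of_real (cos y) + \<i> * complex_of_real (sin y)"
  by (simp add: exp_Euler cos_of_real sin_of_real)

lemma uc_eq: "uc \<mu> x = (cos (\<mu> * x) - 1) / x"
proof (cases "\<mu> * x = 0")
  case True then show ?thesis by (auto simp: uc_def)
next
  case False
  then have nz: "\<mu> \<noteq> 0" "x \<noteq> 0" by auto
  have c: "cos (\<mu> * x) = 1 - 2 * (sin (\<mu> * x / 2))^2"
    using cos_double_sin[of "\<mu> * x / 2"] by simp
  show ?thesis using nz unfolding uc_def c by (simp add: field_simps power2_eq_square)
qed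

lemma hk_eq: "hk \<mu> x = complex_of_real (uc \<mu> x) + \<i> * complex_of_real (sin (\<mu> * x) / x)"
  unfolding hk_def uc_eq exp_i_real
  by (simp add: field_simps complex_eq_iff)

lemma uc_cont: "continuous_on UNIV (uc \<mu>)"
  unfolding uc_def by (intro continuous_intros) auto

lemma uc_odd: "uc \<mu> (- x) = - uc \<mu> x"
  unfolding uc_def by auto

lemma uc_bnd: "x \<noteq> 0 \<Longrightarrow> \<bar>uc \<mu> x\<bar> \<le> 2 / \<bar>x\<bar>"
  unfolding uc_eq using abs_cos_le_one[of "\<mu> * x"]
  by (auto simp: abs_divide intro!: divide_right_mono)

definition KW :: "real \<Rightarrow> real \<Rightarrow> real \<Rightarrow> complex" where
  "KW \<mu> p R = complex_of_real (integral {-R..R} (\<lambda>q. uc \<mu> (q - p)))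
     + \<i> * complex_of_real (Si (\<mu> * (R - p)) - Si (\<mu> * (-R - p)))"

lemma KW_has_integral:
  assumes "R \<ge> 0"
  shows "((\<lambda>q. hk \<mu> (q - p)) has_integral KW \<mu> p R) {-R..R}"
proof -
  have i1: "((\<lambda>q. uc \<mu> (q - p)) has_integral integral {-R..R} (\<lambda>q. uc \<mu> (q - p))) {-R..R}"
    by (intro integrable_integral integrable_continuous_real continuous_on_compose2[OF uc_cont]) 
       (auto intro!: continuous_intros)
  have i2: "((\<lambda>q. sin (\<mu> * (q - p)) / (q - p)) has_integral (Si (\<mu> * (R - p)) - Si (\<mu> * (-R - p)))) {-R..R}"
    using sin_window[of "-R" R \<mu> p] assms by simp
  have "((\<lambda>q. complex_of_real (uc \<mu> (q - p)) + \<i> * complex_of_real (sin (\<mu> * (q - p)) / (q - p)))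
     has_integral KW \<mu> p R) {-R..R}"
    unfolding KW_def
    by (intro has_integral_add has_integral_mult_right has_integral_of_real i1 i2)
  then show ?thesis by (simp add: hk_eq)
qed

lemma KW_lim: "(KW \<mu> p \<longlongrightarrow> \<i> * complex_of_real (pi * sgn \<mu>)) at_top"
proof -
  have c: "((\<lambda>R. integral {-R..R} (\<lambda>q. uc \<mu> (q - p))) \<longlongrightarrow> 0) at_top"
    by (rule odd_window[OF uc_odd uc_cont uc_bnd])
  have t1: "LIM R at_top. R - p :> at_top"
  proof -
    have "LIM R at_top. (- p) + R :> at_top"
      by (rule filterlim_tendsto_add_at_top[OF tendsto_const filterlim_ident])
    then show ?thesis by simp
  qed
  have t2: "LIM R at_top. - R - p :> at_bot"
  proof -
    have "LIM R at_top. p + R :> at_top"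
      by (rule filterlim_tendsto_add_at_top[OF tendsto_const filterlim_ident])
    then have "LIM R at_top. - (p + R) :> at_bot" using filterlim_uminus_at_top[of "\<lambda>R. p + R"] by blast
    moreover have "(\<lambda>R. - (p + R)) = (\<lambda>R. - R - p)" by auto
    ultimately show ?thesis by simp
  qed
  have s1: "((\<lambda>R. Si (\<mu> * (R - p))) \<longlongrightarrow> pi / 2 * sgn \<mu>) at_top"
    by (rule filterlim_compose[OF Si_scale_top t1])
  have s2: "((\<lambda>R. Si (\<mu> * (- R - p))) \<longlongrightarrow> - (pi / 2 * sgn \<mu>)) at_top"
    by (rule filterlim_compose[OF Si_scale_bot t2])
  have "(KW \<mu> p \<longlongrightarrow> complex_of_real 0 + \<i> * complex_of_real (pi / 2 * sgn \<mu> - - (pi / 2 * sgn \<mu>))) at_top"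
    unfolding KW_def[abs_def] by (intro tendsto_intros c s1 s2)
  then show ?thesis by simp
qed



lemma ball_sub_real:
  fixes a b B :: real
  assumes "ball 0 B \<subseteq> cbox a b" "B > 0"
  shows "a \<le> - (B/2)" "B/2 \<le> b"
proof -
  have "-(B/2) \<in> ball 0 B" "B/2 \<in> ball 0 B" using assms(2) by auto
  then have "-(B/2) \<in> cbox a b" "B/2 \<in> cbox a b" using assms(1) by blast+
  then show "a \<le> - (B/2)" "B/2 \<le> b" by auto
qed

lemma lorentz_has_integral: "((\<lambda>x::real. 1 / (1 + x^2)) has_integral pi) UNIV"
proof (subst has_integral_alt', intro conjI allI impI)
  fix a b :: real
  show "(\<lambda>x. if x \<in> UNIV then 1 / (1 + x^2) else 0) integrable_on cbox a b"
    by (simp, intro integrable_continuous_real continuous_intros) (metis add_pos_nonneg power2_eq_square zero_le_square zero_less_one less_irrefl)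
next
  fix e :: real assume e: "e > 0"
  have "\<forall>\<^sub>F x in at_top. dist (arctan x) (pi/2) < e/2"
    using tendsto_arctan_at_top e unfolding tendsto_iff by (meson half_gt_zero)
  then obtain B0 where B0: "\<And>x. x \<ge> B0 \<Longrightarrow> dist (arctan x) (pi/2) < e/2"
    by (auto simp: eventually_at_top_linorder)
  define B where "B = 2 * max B0 1"
  have Bpos: "B > 0" by (simp add: B_def)
  have ftc: "integral {a..b} (\<lambda>x::real. 1 / (1 + x^2)) = arctan b - arctan a" if "a \<le> b" for a b :: real
  proof -
    have "((\<lambda>x::real. 1 / (1 + x^2)) has_integral (arctan b - arctan a)) {a..b}"
    proof (rule fundamental_theorem_of_calculus)
      show "a \<le> b" by fact
      fix x assume "x \<in> {a..b}"
      show "(arctan has_vector_derivative 1 / (1 + x^2)) (at x within {a..b})"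
        using DERIV_arctan[of x]
        by (simp add: has_real_derivative_iff_has_vector_derivative[symmetric] divide_inverse
             has_field_derivative_at_within)
    qed
    then show ?thesis by blast
  qed
  show "\<exists>B>0. \<forall>a b. ball 0 B \<subseteq> cbox a b \<longrightarrow>
          norm (integral (cbox a b) (\<lambda>x::real. if x \<in> UNIV then 1 / (1 + x^2) else 0) - pi) < e"
  proof (intro exI[of _ B] conjI allI impI Bpos)
    fix a b :: real assume sub: "ball 0 B \<subseteq> cbox a b"
    note ab = ball_sub_real[OF sub Bpos]
    have hb: "B/2 \<ge> B0" by (simp add: B_def)
    have "dist (arctan (B/2)) (pi/2) < e/2" using B0 hb by simp
    moreover have "arctan (B/2) \<le> arctan b" "arctan a \<le> arctan (-(B/2))"
      using ab by (auto simp: arctan_le_iff)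
    moreover have "arctan b < pi/2" "- (pi/2) < arctan a" using arctan_bounded by auto
    ultimately have "\<bar>arctan b - arctan a - pi\<bar> < e"
      by (auto simp: dist_real_def arctan_minus)
    moreover have "a \<le> b" using ab Bpos by linarith
    ultimately show "norm (integral (cbox a b) (\<lambda>x::real. if x \<in> UNIV then 1 / (1 + x^2) else 0) - pi) < e"
      by (simp add: ftc)
  qed
qed

lemma has_integral_UNIV_window:
  fixes f :: "real \<Rightarrow> 'a::banach"
  assumes "(f has_integral I) UNIV"
  shows "((\<lambda>R. integral {-R..R} f) \<longlongrightarrow> I) at_top"
proof (rule tendstoI)
  fix e :: real assume e: "e > 0"
  from assms[unfolded has_integral_alt'] e obtain B where B: "B > 0"
    "\<And>a b. ball 0 B \<subseteq> cbox a b \<Longrightarrow> norm (integral (cbox a b) f - I) < e"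
    by auto
  have "norm (integral {-R..R} f - I) < e" if "R \<ge> B" for R
  proof -
    have "ball 0 B \<subseteq> cbox (-R) R" using that by (auto simp: subset_iff dist_real_def)
    then show ?thesis using B(2)[of "-R" R] by simp
  qed
  then show "\<forall>\<^sub>F R in at_top. dist (integral {-R..R} f) I < e"
    by (auto simp: eventually_at_top_linorder dist_norm)
qed



definition fcore :: "real \<Rightarrow> real \<Rightarrow> real \<Rightarrow> real \<Rightarrow> real \<Rightarrow> complex" where
  "fcore \<kappa> t c c' q = complex_of_real (1 / (\<kappa> * pi)) * exp (- \<i> * complex_of_real (t * q)) *
      complex_of_real ((sin (\<kappa> * (q - c)) / (q - c)) * (sin (\<kappa> * (q - c')) / (q - c')))"

lemma fcore_meas: "fcore \<kappa> t c c' \<in> borel_measurable (lebesgue_on UNIV)"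
proof -
  have "fcore \<kappa> t c c' \<in> borel_measurable borel"
    unfolding fcore_def[abs_def] by measurable
  then have "fcore \<kappa> t c c' \<in> borel_measurable lebesgue"
    by (intro measurable_completion) simp
  then show ?thesis by (simp add: lebesgue_on_UNIV_eq)
qed

lemma sbound:
  fixes \<kappa> q c :: real
  assumes k: "\<kappa> > 0"
  shows "\<bar>sin (\<kappa> * (q - c)) / (q - c)\<bar> * (1 + \<bar>q\<bar>) \<le> (\<kappa> + 1) * (2 + \<bar>c\<bar>)"
proof (cases "q = c")
  case True then show ?thesis using k by simp
next
  case False
  define x where "x = q - c"
  have x0: "\<bar>x\<bar> > 0" using False by (simp add: x_def)
  have q: "1 + \<bar>q\<bar> \<le> 1 + \<bar>c\<bar> + \<bar>x\<bar>" by (simp add: x_def)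
  have s1: "\<bar>sin (\<kappa> * x)\<bar> \<le> \<kappa> * \<bar>x\<bar>" using abs_sin_x_le_abs_x[of "\<kappa> * x"] k by (simp add: abs_mult)
  have s2: "\<bar>sin (\<kappa> * x)\<bar> \<le> 1" by simp
  have "\<bar>sin (\<kappa> * x) / x\<bar> * (1 + \<bar>q\<bar>) \<le> (\<kappa> + 1) * (2 + \<bar>c\<bar>)"
  proof (cases "\<bar>x\<bar> \<le> 1")
    case True
    have "\<bar>sin (\<kappa> * x) / x\<bar> \<le> \<kappa>" using s1 x0 by (simp add: abs_divide divide_le_eq)
    moreover have "1 + \<bar>q\<bar> \<le> 2 + \<bar>c\<bar>" using q True by linarith
    ultimately have "\<bar>sin (\<kappa> * x) / x\<bar> * (1 + \<bar>q\<bar>) \<le> \<kappa> * (2 + \<bar>c\<bar>)"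
      using k by (intro mult_mono) auto
    also have "\<dots> \<le> (\<kappa> + 1) * (2 + \<bar>c\<bar>)" by (simp add: mult_right_mono)
    finally show ?thesis .
  next
    case False
    have "\<bar>sin (\<kappa> * x) / x\<bar> * (1 + \<bar>q\<bar>) \<le> (1 / \<bar>x\<bar>) * (1 + \<bar>c\<bar> + \<bar>x\<bar>)"
      using s2 x0 q by (intro mult_mono) (auto simp: abs_divide divide_right_mono)
    also have "\<dots> = (1 + \<bar>c\<bar>) / \<bar>x\<bar> + 1" using x0 by (simp add: field_simps)
    also have "\<dots> \<le> (1 + \<bar>c\<bar>) + 1"
    proof -
      have "(1 + \<bar>c\<bar>) * 1 \<le> (1 + \<bar>c\<bar>) * \<bar>x\<bar>" using False by (intro mult_left_mono) auto
      then show ?thesis using x0 by (simp add: divide_le_eq)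
    qed
    also have "\<dots> \<le> (\<kappa> + 1) * (2 + \<bar>c\<bar>)" using k by (simp add: algebra_simps)
    finally show ?thesis .
  qed
  then show ?thesis by (simp add: x_def)
qed

lemma fcore_bound:
  assumes k: "\<kappa> > 0"
  shows "norm (fcore \<kappa> t c c' q) \<le> (1 / (\<kappa> * pi)) * ((\<kappa> + 1) * (2 + \<bar>c\<bar>)) * ((\<kappa> + 1) * (2 + \<bar>c'\<bar>)) * (1 / (1 + q^2))"
proof -
  let ?A = "\<bar>sin (\<kappa> * (q - c)) / (q - c)\<bar>" and ?B = "\<bar>sin (\<kappa> * (q - c')) / (q - c')\<bar>"
  let ?K = "(\<kappa> + 1) * (2 + \<bar>c\<bar>)" and ?K' = "(\<kappa> + 1) * (2 + \<bar>c'\<bar>)"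
  have e: "norm (exp (- \<i> * complex_of_real (t * q))) = 1"
    using norm_exp_i_times[of "- (t * q)"] by simp
  have n: "norm (fcore \<kappa> t c c' q) = (1 / (\<kappa> * pi)) * (?A * ?B)"
    unfolding fcore_def norm_mult norm_of_real e using k by (simp add: abs_mult)
  have "(?A * (1 + \<bar>q\<bar>)) * (?B * (1 + \<bar>q\<bar>)) \<le> ?K * ?K'"
  proof (rule mult_mono)
    show "?A * (1 + \<bar>q\<bar>) \<le> ?K" by (rule sbound[OF k])
    show "?B * (1 + \<bar>q\<bar>) \<le> ?K'" by (rule sbound[OF k])
    show "0 \<le> ?K" using k by simp
    show "0 \<le> ?B * (1 + \<bar>q\<bar>)" by simp
  qed
  moreover have "1 + q^2 \<le> (1 + \<bar>q\<bar>)^2" by (simp add: power2_eq_square algebra_simps)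
  ultimately have "?A * ?B * (1 + q^2) \<le> ?K * ?K'"
    by (smt (verit, best) mult.commute mult.left_commute mult_left_mono power2_eq_square zero_le_mult_iff abs_ge_zero)
  then have "?A * ?B \<le> ?K * ?K' * (1 / (1 + q^2))"
    by (simp add: field_simps add_pos_nonneg)
  then have "(1 / (\<kappa> * pi)) * (?A * ?B) \<le> (1 / (\<kappa> * pi)) * (?K * ?K' * (1 / (1 + q^2)))"
    by (rule mult_left_mono) (use k in simp)
  then show ?thesis unfolding n by (simp only: mult.assoc)
qed

lemma fcore_integrable:
  assumes k: "\<kappa> > 0"
  shows "fcore \<kappa> t c c' integrable_on UNIV"
proof (rule measurable_bounded_by_integrable_imp_integrable[OF fcore_meas])
  show "(\<lambda>q. (1 / (\<kappa> * pi)) * ((\<kappa> + 1) * (2 + \<bar>c\<bar>)) * ((\<kappa> + 1) * (2 + \<bar>c'\<bar>)) * (1 / (1 + q^2))) integrable_on UNIV"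
    using has_integral_mult_right[OF lorentz_has_integral] by blast
  show "norm (fcore \<kappa> t c c' x) \<le> (1 / (\<kappa> * pi)) * ((\<kappa> + 1) * (2 + \<bar>c\<bar>)) * ((\<kappa> + 1) * (2 + \<bar>c'\<bar>)) * (1 / (1 + x^2))" for x
    by (rule fcore_bound[OF k])
qed auto



lemma alg_identity:
  fixes x y d \<kappa> :: real and A E T U W :: complex
  assumes "x \<noteq> 0" "y \<noteq> 0" "d \<noteq> 0" "\<kappa> \<noteq> 0" "y = x + d" "A \<noteq> 0" "E \<noteq> 0" "U \<noteq> 0" "W \<noteq> 0"
  shows "complex_of_real (1 / (\<kappa> * pi)) * T * (((A - 1/A) / (2*\<i>)) / complex_of_real x * (((A*E) - 1/(A*E)) / (2*\<i>)) / complex_of_real y)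
   = complex_of_real (1 / (\<kappa> * pi * d)) * (-1/4) *
     (U * (E * ((A^2 * (T/U) - 1) / complex_of_real x) - (E + 1/E) * ((T/U - 1) / complex_of_real x)
           + (1/E) * ((T / (U * A^2) - 1) / complex_of_real x))
    - W * ((1/E) * (((A*E)^2 * (T/W) - 1) / complex_of_real y) - (E + 1/E) * ((T/W - 1) / complex_of_real y)
           + E * ((T / (W * (A*E)^2) - 1) / complex_of_real y)))"
proof -
  have y: "complex_of_real y = complex_of_real x + complex_of_real d" using assms(5) by simp
  have nz: "complex_of_real x \<noteq> 0" "complex_of_real y \<noteq> 0" "complex_of_real d \<noteq> 0" "complex_of_real \<kappa> \<noteq> 0"
    "complex_of_real pi \<noteq> 0" "complex_of_real x + complex_of_real d \<noteq> 0"
    using assms by (auto simp flip: of_real_add)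
  define Z where "Z = A^2 * E - E - 1/E + 1/(A^2 * E)"
  define X where "X = complex_of_real x"
  define Y where "Y = complex_of_real y"
  define D where "D = complex_of_real d"
  have XY: "Y = X + D" "X \<noteq> 0" "Y \<noteq> 0" "D \<noteq> 0" using nz y by (auto simp: X_def Y_def D_def)
  have h1: "U * (E * ((A^2 * (T/U) - 1) / X) - (E + 1/E) * ((T/U - 1) / X)
           + (1/E) * ((T / (U * A^2) - 1) / X)) = T * Z / X"
    using assms(6-9) XY unfolding Z_def by (simp add: field_simps power2_eq_square)
  have h2: "W * ((1/E) * (((A*E)^2 * (T/W) - 1) / Y) - (E + 1/E) * ((T/W - 1) / Y)
           + E * ((T / (W * (A*E)^2) - 1) / Y)) = T * Z / Y"
    using assms(6-9) XY(3) unfolding Z_def by (simp add: field_simps power2_eq_square)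
  have h3: "((A - 1/A) / (2*\<i>)) * ((A*E) - 1/(A*E)) / (2*\<i>) = - Z / 4"
    using assms(6-9) unfolding Z_def by (simp add: field_simps power2_eq_square)
  have h4: "T * Z / X - T * Z / Y = T * Z * D / (X * Y)"
    using XY by (simp add: field_simps)
  define P where "P = (A - 1/A) / (2*\<i>)"
  define Q where "Q = ((A*E) - 1/(A*E)) / (2*\<i>)"
  have h3': "P * Q = - Z / 4" using assms(6-9) unfolding P_def Q_def Z_def by (simp add: field_simps power2_eq_square)
  have "complex_of_real (1 / (\<kappa> * pi)) * T * (P / X * Q / Y)
      = complex_of_real (1 / (\<kappa> * pi)) * T * (P * Q) / (X * Y)"
    by simp
  also have "\<dots> = complex_of_real (1 / (\<kappa> * pi)) * T * (- Z / 4) / (X * Y)"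
    by (simp only: h3')
  also have "\<dots> = complex_of_real (1 / (\<kappa> * pi * d)) * (-1/4) * (T * Z * D / (X * Y))"
    using XY nz by (simp add: D_def field_simps)
  also have "\<dots> = complex_of_real (1 / (\<kappa> * pi * d)) * (-1/4) * (T * Z / X - T * Z / Y)"
    by (simp add: h4)
  finally show ?thesis unfolding h1[unfolded X_def] h2[unfolded Y_def] X_def Y_def P_def Q_def .
qed



definition Comb :: "real \<Rightarrow> real \<Rightarrow> real \<Rightarrow> real \<Rightarrow> (real \<Rightarrow> real \<Rightarrow> complex) \<Rightarrow> complex" where
  "Comb \<kappa> t c c' F =
    (let E = exp (\<i> * complex_of_real (\<kappa> * (c - c'))); U = exp (- \<i> * complex_of_real (t * c));
         W = exp (- \<i> * complex_of_real (t * c')) in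
     complex_of_real (1 / (\<kappa> * pi * (c - c'))) * (-1/4) *
     (U * (E * F (2*\<kappa> - t) c - (E + 1/E) * F (-t) c + (1/E) * F (-(2*\<kappa> + t)) c)
    - W * ((1/E) * F (2*\<kappa> - t) c' - (E + 1/E) * F (-t) c' + E * F (-(2*\<kappa> + t)) c')))"

lemma exp_sq: "exp (z::complex) ^ 2 = exp (2 * z)"
  using exp_of_nat_mult[of 2 z] by simp

lemma expfacts:
  assumes x: "x = q - p"
  shows "exp (\<i> * complex_of_real ((2*\<kappa> - t) * x)) = exp (\<i> * complex_of_real (\<kappa> * x))^2 * (exp (- \<i> * complex_of_real (t * q)) / exp (- \<i> * complex_of_real (t * p)))"
    and "exp (\<i> * complex_of_real ((-t) * x)) = exp (- \<i> * complex_of_real (t * q)) / exp (- \<i> * complex_of_real (t * p))"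
    and "exp (\<i> * complex_of_real ((-(2*\<kappa> + t)) * x)) = exp (- \<i> * complex_of_real (t * q)) / (exp (- \<i> * complex_of_real (t * p)) * exp (\<i> * complex_of_real (\<kappa> * x))^2)"
proof -
  show "exp (\<i> * complex_of_real ((2*\<kappa> - t) * x)) = exp (\<i> * complex_of_real (\<kappa> * x))^2 * (exp (- \<i> * complex_of_real (t * q)) / exp (- \<i> * complex_of_real (t * p)))"
    unfolding exp_sq exp_diff[symmetric] exp_add[symmetric] by (rule arg_cong[where f=exp]) (simp add: x algebra_simps)
  show "exp (\<i> * complex_of_real ((-t) * x)) = exp (- \<i> * complex_of_real (t * q)) / exp (- \<i> * complex_of_real (t * p))"
    unfolding exp_diff[symmetric] by (rule arg_cong[where f=exp]) (simp add: x algebra_simps)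
  show "exp (\<i> * complex_of_real ((-(2*\<kappa> + t)) * x)) = exp (- \<i> * complex_of_real (t * q)) / (exp (- \<i> * complex_of_real (t * p)) * exp (\<i> * complex_of_real (\<kappa> * x))^2)"
    unfolding exp_sq exp_diff[symmetric] exp_add[symmetric] by (rule arg_cong[where f=exp]) (simp add: x algebra_simps)
qed

lemma sin_cexp: "complex_of_real (sin y) = (exp (\<i> * complex_of_real y) - 1 / exp (\<i> * complex_of_real y)) / (2 * \<i>)"
  by (simp add: sin_of_real[symmetric] sin_exp_eq exp_minus inverse_eq_divide)

lemma fcore_eq_Comb:
  assumes k: "\<kappa> > 0" and cc: "c \<noteq> c'" and q: "q \<noteq> c" "q \<noteq> c'"
  shows "fcore \<kappa> t c c' q = Comb \<kappa> t c c' (\<lambda>\<mu> p. hk \<mu> (q - p))"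
proof -
  define x where "x = q - c"
  define y where "y = q - c'"
  define d where "d = c - c'"
  define A where "A = exp (\<i> * complex_of_real (\<kappa> * x))"
  define E where "E = exp (\<i> * complex_of_real (\<kappa> * d))"
  define T where "T = exp (- \<i> * complex_of_real (t * q))"
  define U where "U = exp (- \<i> * complex_of_real (t * c))"
  define W where "W = exp (- \<i> * complex_of_real (t * c'))"
  have yx: "y = x + d" by (simp add: x_def y_def d_def)
  have B: "exp (\<i> * complex_of_real (\<kappa> * y)) = A * E"
    unfolding A_def E_def exp_add[symmetric] by (rule arg_cong[where f=exp]) (simp add: yx algebra_simps)
  have nz: "x \<noteq> 0" "y \<noteq> 0" "d \<noteq> 0" "\<kappa> \<noteq> 0" "A \<noteq> 0" "E \<noteq> 0" "U \<noteq> 0" "W \<noteq> 0"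
    using k cc q by (auto simp: x_def y_def d_def A_def E_def U_def W_def)
  have hx: "hk (2*\<kappa> - t) (q - c) = (A^2 * (T/U) - 1) / complex_of_real x"
           "hk (-t) (q - c) = (T/U - 1) / complex_of_real x"
           "hk (-(2*\<kappa> + t)) (q - c) = (T / (U * A^2) - 1) / complex_of_real x"
    unfolding hk_def x_def[symmetric] using expfacts(1-3)[OF x_def]
    by (simp_all add: A_def T_def U_def)
  have hy: "hk (2*\<kappa> - t) (q - c') = ((A*E)^2 * (T/W) - 1) / complex_of_real y"
           "hk (-t) (q - c') = (T/W - 1) / complex_of_real y"
           "hk (-(2*\<kappa> + t)) (q - c') = (T / (W * (A*E)^2) - 1) / complex_of_real y"
    unfolding hk_def y_def[symmetric] using expfacts(1-3)[OF y_def]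
    by (simp_all add: B[symmetric] T_def W_def)
  have f: "fcore \<kappa> t c c' q = complex_of_real (1 / (\<kappa> * pi)) * T * (((A - 1/A) / (2*\<i>)) / complex_of_real x * (((A*E) - 1/(A*E)) / (2*\<i>)) / complex_of_real y)"
  proof -
    have s1: "complex_of_real (sin (\<kappa> * x)) = (A - 1/A) / (2*\<i>)" by (simp only: sin_cexp A_def)
    have s2: "complex_of_real (sin (\<kappa> * y)) = ((A*E) - 1/(A*E)) / (2*\<i>)" by (simp only: sin_cexp B)
    show ?thesis
      unfolding fcore_def x_def[symmetric] y_def[symmetric] T_def[symmetric] of_real_mult of_real_divide s1 s2
      by (simp only: times_divide_eq_right T_def of_real_mult)
  qed
  show ?thesis
    unfolding f Comb_def Let_def E_def[symmetric] U_def[symmetric] W_def[symmetric] d_def[symmetric] hx hy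
    by (rule alg_identity[OF nz(1-4) yx nz(5-8)])
qed



lemma Comb_has_integral:
  assumes "R \<ge> 0"
  shows "((\<lambda>q. Comb \<kappa> t c c' (\<lambda>\<mu> p. hk \<mu> (q - p))) has_integral Comb \<kappa> t c c' (\<lambda>\<mu> p. KW \<mu> p R)) {-R..R}"
  unfolding Comb_def Let_def
  by (intro has_integral_mult_right has_integral_diff has_integral_add KW_has_integral assms)

lemma Comb_lim:
  "((\<lambda>R. Comb \<kappa> t c c' (\<lambda>\<mu> p. KW \<mu> p R)) \<longlongrightarrow> Comb \<kappa> t c c' (\<lambda>\<mu> p. \<i> * complex_of_real (pi * sgn \<mu>))) at_top"
  unfolding Comb_def Let_def
  by (intro tendsto_intros KW_lim)

lemma fcore_has_integral:
  assumes k: "\<kappa> > 0" and cc: "c \<noteq> c'"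
  shows "(fcore \<kappa> t c c' has_integral Comb \<kappa> t c c' (\<lambda>\<mu> p. \<i> * complex_of_real (pi * sgn \<mu>))) UNIV"
proof -
  let ?I = "integral UNIV (fcore \<kappa> t c c')"
  have hI: "(fcore \<kappa> t c c' has_integral ?I) UNIV"
    using fcore_integrable[OF k] by blast
  have lim1: "((\<lambda>R. integral {-R..R} (fcore \<kappa> t c c')) \<longlongrightarrow> ?I) at_top"
    by (rule has_integral_UNIV_window[OF hI])
  have w: "integral {-R..R} (fcore \<kappa> t c c') = Comb \<kappa> t c c' (\<lambda>\<mu> p. KW \<mu> p R)" if "R \<ge> 0" for R
  proof (rule integral_unique, rule has_integral_spike_finite[OF _ _ Comb_has_integral[OF that]])
    show "finite {c, c'}" by simp
    fix q assume "q \<in> {-R..R} - {c, c'}"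
    then show "fcore \<kappa> t c c' q = Comb \<kappa> t c c' (\<lambda>\<mu> p. hk \<mu> (q - p))"
      using fcore_eq_Comb[OF k cc] by auto
  qed
  have lim2: "((\<lambda>R. integral {-R..R} (fcore \<kappa> t c c')) \<longlongrightarrow> Comb \<kappa> t c c' (\<lambda>\<mu> p. \<i> * complex_of_real (pi * sgn \<mu>))) at_top"
  proof (rule Lim_transform_eventually[OF Comb_lim])
    show "\<forall>\<^sub>F R in at_top. Comb \<kappa> t c c' (\<lambda>\<mu> p. KW \<mu> p R) = integral {-R..R} (fcore \<kappa> t c c')"
      using eventually_ge_at_top[of "0::real"] by (rule eventually_mono) (simp add: w)
  qed
  have "?I = Comb \<kappa> t c c' (\<lambda>\<mu> p. \<i> * complex_of_real (pi * sgn \<mu>))"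
    using tendsto_unique[OF _ lim1 lim2] by simp
  then show ?thesis using hI by simp
qed



definition Lc where "Lc \<kappa> t c c' = Comb \<kappa> t c c' (\<lambda>\<mu> p. \<i> * complex_of_real (pi * sgn \<mu>))"

lemma Lc_gen:
  "Lc \<kappa> t c c' =
    (let E = exp (\<i> * complex_of_real (\<kappa> * (c - c'))); U = exp (- \<i> * complex_of_real (t * c));
         W = exp (- \<i> * complex_of_real (t * c')); s1 = complex_of_real (sgn (2*\<kappa> - t));
         s2 = complex_of_real (sgn (-t)); s3 = complex_of_real (sgn (-(2*\<kappa> + t))) in
     complex_of_real (1 / (\<kappa> * pi * (c - c'))) * (-1/4) * (\<i> * complex_of_real pi) *
     (U * (E * s1 - (E + 1/E) * s2 + (1/E) * s3) - W * ((1/E) * s1 - (E + 1/E) * s2 + E * s3)))"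
  unfolding Lc_def Comb_def Let_def by (simp add: algebra_simps)

lemma Lc_mid:
  assumes k: "\<kappa> > 0" and cc: "c \<noteq> c'" and t: "0 < t" "t < 2*\<kappa>"
  shows "Lc \<kappa> t c c' = \<i> * complex_of_real (1 / (2 * \<kappa> * (c - c'))) *
      (exp (- \<i> * complex_of_real (t * c')) / exp (\<i> * complex_of_real (\<kappa> * (c - c')))
       - exp (- \<i> * complex_of_real (t * c)) * exp (\<i> * complex_of_real (\<kappa> * (c - c'))))"
proof -
  have s: "sgn (2*\<kappa> - t) = 1" "sgn (-t) = -1" "sgn (-(2*\<kappa> + t)) = -1" using k t by auto
  have nz: "complex_of_real (c - c') \<noteq> 0" "complex_of_real \<kappa> \<noteq> 0" "complex_of_real pi \<noteq> 0" using k cc by auto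
  show ?thesis unfolding Lc_gen Let_def s using nz
    by (simp add: field_simps)
qed

lemma Lc_zero:
  assumes k: "\<kappa> > 0" and cc: "c \<noteq> c'" and t: "2*\<kappa> \<le> \<bar>t\<bar>"
  shows "Lc \<kappa> t c c' = 0"
proof -
  define E where "E = exp (\<i> * complex_of_real (\<kappa> * (c - c')))"
  define U where "U = exp (- \<i> * complex_of_real (t * c))"
  define W where "W = exp (- \<i> * complex_of_real (t * c'))"
  have nzE: "E \<noteq> 0" "U \<noteq> 0" "W \<noteq> 0" by (auto simp: E_def U_def W_def)
  have "U * (E * complex_of_real (sgn (2*\<kappa> - t)) - (E + 1/E) * complex_of_real (sgn (-t)) + (1/E) * complex_of_real (sgn (-(2*\<kappa> + t))))
      - W * ((1/E) * complex_of_real (sgn (2*\<kappa> - t)) - (E + 1/E) * complex_of_real (sgn (-t)) + E * complex_of_real (sgn (-(2*\<kappa> + t)))) = 0"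
  proof (cases "t > 0")
    case True
    show ?thesis
    proof (cases "t = 2*\<kappa>")
      case True
      have "U * E = W / E"
        unfolding U_def W_def E_def exp_add[symmetric] exp_diff[symmetric]
        by (rule arg_cong[where f=exp]) (simp add: True algebra_simps)
      moreover have "sgn (2*\<kappa> - t) = 0" "sgn (-t) = -1" "sgn (-(2*\<kappa> + t)) = -1" using k True by auto
      ultimately show ?thesis using nzE by (simp add: field_simps)
    next
      case False
      then have "sgn (2*\<kappa> - t) = -1" "sgn (-t) = -1" "sgn (-(2*\<kappa> + t)) = -1" using k t \<open>t > 0\<close> by auto
      then show ?thesis using nzE by (simp add: field_simps)
    qed
  next
    case False
    show ?thesis
    proof (cases "t = -2*\<kappa>")
      case True
      have "U / E = W * E"
        unfolding U_def W_def E_def exp_add[symmetric] exp_diff[symmetric]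
        by (rule arg_cong[where f=exp]) (simp add: True algebra_simps)
      moreover have "sgn (2*\<kappa> - t) = 1" "sgn (-t) = 1" "sgn (-(2*\<kappa> + t)) = 0" using k True by auto
      ultimately show ?thesis using nzE by (simp add: field_simps)
    next
      case F2: False
      then have "sgn (2*\<kappa> - t) = 1" "sgn (-t) = 1" "sgn (-(2*\<kappa> + t)) = 1" using k t False by auto
      then show ?thesis using nzE by (simp add: field_simps)
    qed
  qed
  then show ?thesis unfolding Lc_gen Let_def E_def[symmetric] U_def[symmetric] W_def[symmetric] by simp
qed

lemma link: "decoh_integrand \<alpha> g0 lam \<kappa>0 \<omega> n d\<tau> b b' =
  fcore \<kappa>0 (\<alpha> * g0 * d\<tau> * \<omega> * real_of_int n) (2 * lam * b / (\<alpha> * g0 * d\<tau>)) (2 * lam * b' / (\<alpha> * g0 * d\<tau>))"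
  unfolding decoh_integrand_def fcore_def Let_def by (rule ext) simp

lemma exp_arg_eq1:
  assumes "r1 + r2 = 2 * r3"
  shows "exp (- \<i> * complex_of_real r1) / exp (\<i> * complex_of_real r2) = exp (- 2 * \<i> * complex_of_real r3)"
proof -
  have r1: "r1 = 2 * r3 - r2" using assms by simp
  show ?thesis unfolding exp_diff[symmetric] by (rule arg_cong[where f=exp]) (simp add: r1 algebra_simps)
qed

lemma exp_arg_eq2:
  assumes "- r1 + r2 = 2 * r3"
  shows "exp (- \<i> * complex_of_real r1) * exp (\<i> * complex_of_real r2) = exp (2 * \<i> * complex_of_real r3)"
proof -
  have r2: "r2 = 2 * r3 + r1" using assms by simp
  show ?thesis unfolding exp_add[symmetric] by (rule arg_cong[where f=exp]) (simp add: r2 algebra_simps)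
qed

lemma neg_arg:
  assumes "- (x::real) = y"
  shows "- 2 * \<i> * complex_of_real x = 2 * \<i> * complex_of_real y"
proof -
  have y: "y = - x" using assms by simp
  show ?thesis unfolding y by simp
qed

lemma V_zero:
  assumes a: "\<alpha> * g0 * d\<tau> \<noteq> 0" and e: "\<omega> * real_of_int n * (\<alpha> * g0 * d\<tau>) = 2 * \<kappa>0"
  shows "V_kl \<alpha> g0 lam \<kappa>0 \<omega> n d\<tau> b b' = 0"
proof -
  let ?a = "\<alpha> * g0 * d\<tau>"
  have k: "\<kappa>0 / ?a = \<omega> * real_of_int n / 2" using a e by (simp add: field_simps)
  have eq: "- 2 * \<i> * complex_of_real (lam * (\<kappa>0 / ?a * (b - b') + \<omega> * real_of_int n * b'))
      = 2 * \<i> * complex_of_real (lam * (\<kappa>0 / ?a * (b - b') - \<omega> * real_of_int n * b))"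
  proof -
    have "- (lam * (\<kappa>0 / ?a * (b - b') + \<omega> * real_of_int n * b'))
        = lam * (\<kappa>0 / ?a * (b - b') - \<omega> * real_of_int n * b)"
      unfolding k by (simp add: field_simps)
    then show ?thesis by (rule neg_arg)
  qed
  show ?thesis unfolding V_kl_def eq by simp
qed

theorem mainTheorem6:
  fixes \<alpha> g0 lam \<kappa>0 \<omega> :: real
  assumes "\<alpha> > 0" "g0 > 0" "lam > 0" "\<kappa>0 > 0" "\<omega> > 0"
  shows
    "(\<forall>k l :: nat. \<forall>d\<tau> b b'. l < k \<and> d\<tau> > 0 \<and> b \<noteq> b' \<longrightarrow>
        (decoh_integrand \<alpha> g0 lam \<kappa>0 \<omega> (int k - int l) d\<tau> b b' has_integral
          (\<i> * complex_of_real (\<alpha> * g0 * d\<tau> / (4 * lam * \<kappa>0))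
           * V_kl \<alpha> g0 lam \<kappa>0 \<omega> (int k - int l) d\<tau> b b'
           * complex_of_real (heaviside (2 * \<kappa>0 - \<omega> * \<alpha> * g0 * real (k - l) * d\<tau>)))) UNIV)
   \<and> (\<forall>k l :: nat. \<forall>d\<tau> b b'. l < k \<and> b \<noteq> b' \<and>
        d\<tau> = 2 * \<kappa>0 / (\<alpha> * g0 * \<omega> * real (k - l)) \<longrightarrow>
        V_kl \<alpha> g0 lam \<kappa>0 \<omega> (int k - int l) d\<tau> b b' = 0)
   \<and> (\<forall>k l :: nat. \<forall>d\<tau> b b'. k \<noteq> l \<and> b \<noteq> b' \<and>
        d\<tau> \<ge> 2 * \<kappa>0 / (\<alpha> * g0 * \<omega>) \<longrightarrow>
        decoh_factor \<alpha> g0 lam \<kappa>0 \<omega> k l d\<tau> b b' = 0)"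
proof (intro conjI allI impI)
  note pos = assms
  fix k l :: nat and d\<tau> b b' :: real
  assume h: "l < k \<and> 0 < d\<tau> \<and> b \<noteq> b'"
  let ?n = "int k - int l"
  let ?a = "\<alpha> * g0 * d\<tau>"
  let ?t = "\<alpha> * g0 * d\<tau> * \<omega> * real_of_int ?n"
  let ?c = "2 * lam * b / ?a" and ?c' = "2 * lam * b' / ?a"
  have a: "?a > 0" using pos h by simp
  have rn: "real (k - l) = real_of_int ?n" using h by simp
  have n1: "real_of_int ?n \<ge> 1" using h by simp
  have tpos: "?t > 0" using a pos n1 by simp
  have cc: "?c \<noteq> ?c'" using a pos h by (simp add: field_simps)
  have cdiff: "?c - ?c' = 2 * lam * (b - b') / ?a" by (simp add: diff_divide_distrib right_diff_distrib)
  have HI: "(decoh_integrand \<alpha> g0 lam \<kappa>0 \<omega> ?n d\<tau> b b' has_integral Lc \<kappa>0 ?t ?c ?c') UNIV"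
    unfolding link Lc_def by (rule fcore_has_integral[OF pos(4) cc])
  have harg: "2 * \<kappa>0 - \<omega> * \<alpha> * g0 * real (k - l) * d\<tau> = 2 * \<kappa>0 - ?t"
    unfolding rn by (simp add: algebra_simps)
  show "(decoh_integrand \<alpha> g0 lam \<kappa>0 \<omega> ?n d\<tau> b b' has_integral
          (\<i> * complex_of_real (\<alpha> * g0 * d\<tau> / (4 * lam * \<kappa>0))
           * V_kl \<alpha> g0 lam \<kappa>0 \<omega> ?n d\<tau> b b'
           * complex_of_real (heaviside (2 * \<kappa>0 - \<omega> * \<alpha> * g0 * real (k - l) * d\<tau>)))) UNIV"
  proof (cases "?t < 2 * \<kappa>0")
    case True
    have hv: "heaviside (2 * \<kappa>0 - \<omega> * \<alpha> * g0 * real (k - l) * d\<tau>) = 1"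
      unfolding harg heaviside_def using True by simp
    have W: "exp (- \<i> * complex_of_real (?t * ?c')) / exp (\<i> * complex_of_real (\<kappa>0 * (?c - ?c')))
        = exp (- 2 * \<i> * complex_of_real (lam * (\<kappa>0 / ?a * (b - b') + \<omega> * real_of_int ?n * b')))"
      by (rule exp_arg_eq1) (use a pos h in \<open>simp add: field_simps\<close>)
    have U: "exp (- \<i> * complex_of_real (?t * ?c)) * exp (\<i> * complex_of_real (\<kappa>0 * (?c - ?c')))
        = exp (2 * \<i> * complex_of_real (lam * (\<kappa>0 / ?a * (b - b') - \<omega> * real_of_int ?n * b)))"
      by (rule exp_arg_eq2) (use a pos h in \<open>simp add: field_simps\<close>)
    have coef: "complex_of_real (1 / (2 * \<kappa>0 * (?c - ?c'))) = complex_of_real (?a / (4 * lam * \<kappa>0)) / complex_of_real (b - b')"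
      unfolding cdiff using a pos h by (simp add: field_simps)
    have "Lc \<kappa>0 ?t ?c ?c' = \<i> * complex_of_real (?a / (4 * lam * \<kappa>0)) * V_kl \<alpha> g0 lam \<kappa>0 \<omega> ?n d\<tau> b b'"
      unfolding Lc_mid[OF pos(4) cc tpos True] W U coef V_kl_def by simp
    then show ?thesis using HI hv by simp
  next
    case False
    have L0: "Lc \<kappa>0 ?t ?c ?c' = 0" using False tpos by (intro Lc_zero[OF pos(4) cc]) simp
    show ?thesis
    proof (cases "?t = 2 * \<kappa>0")
      case True
      have "V_kl \<alpha> g0 lam \<kappa>0 \<omega> ?n d\<tau> b b' = 0"
        by (rule V_zero) (use a pos h True in \<open>simp_all add: algebra_simps\<close>)
      then show ?thesis using HI L0 by simp
    next
      case F2: False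
      have "heaviside (2 * \<kappa>0 - \<omega> * \<alpha> * g0 * real (k - l) * d\<tau>) = 0"
        unfolding harg heaviside_def using False F2 by simp
      then show ?thesis using HI L0 by simp
    qed
  qed
next
  fix k l :: nat and d\<tau> b b' :: real
  assume h: "l < k \<and> b \<noteq> b' \<and> d\<tau> = 2 * \<kappa>0 / (\<alpha> * g0 * \<omega> * real (k - l))"
  have rn: "real (k - l) = real_of_int (int k - int l)" using h by simp
  have n1: "real (k - l) > 0" using h by simp
  show "V_kl \<alpha> g0 lam \<kappa>0 \<omega> (int k - int l) d\<tau> b b' = 0"
  proof (rule V_zero)
    show "\<alpha> * g0 * d\<tau> \<noteq> 0" using h assms n1 by simp
    show "\<omega> * real_of_int (int k - int l) * (\<alpha> * g0 * d\<tau>) = 2 * \<kappa>0"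
      using h assms n1 unfolding rn[symmetric] by (simp add: field_simps)
  qed
next
  fix k l :: nat and d\<tau> b b' :: real
  assume h: "k \<noteq> l \<and> b \<noteq> b' \<and> 2 * \<kappa>0 / (\<alpha> * g0 * \<omega>) \<le> d\<tau>"
  note pos = assms
  let ?n = "int k - int l"
  let ?a = "\<alpha> * g0 * d\<tau>"
  let ?t = "\<alpha> * g0 * d\<tau> * \<omega> * real_of_int ?n"
  let ?c = "2 * lam * b / ?a" and ?c' = "2 * lam * b' / ?a"
  have g: "\<alpha> * g0 * \<omega> > 0" using pos by simp
  have d0: "2 * \<kappa>0 / (\<alpha> * g0 * \<omega>) > 0" using pos by simp
  have dpos: "d\<tau> > 0" using h d0 by linarith
  have a: "?a > 0" using pos dpos by simp
  have aw: "?a * \<omega> \<ge> 2 * \<kappa>0"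
  proof -
    have "2 * \<kappa>0 \<le> d\<tau> * (\<alpha> * g0 * \<omega>)" using h g by (simp add: divide_le_eq)
    then show ?thesis by (simp add: algebra_simps)
  qed
  have n1: "\<bar>real_of_int ?n\<bar> \<ge> 1" using h by linarith
  have tabs: "\<bar>?t\<bar> = ?a * \<omega> * \<bar>real_of_int ?n\<bar>" using a pos dpos by (simp add: abs_mult)
  have "?a * \<omega> * 1 \<le> ?a * \<omega> * \<bar>real_of_int ?n\<bar>" using a pos n1 by (intro mult_left_mono) auto
  then have tbig: "2 * \<kappa>0 \<le> \<bar>?t\<bar>" using aw tabs by linarith
  have cc: "?c \<noteq> ?c'" using a pos h dpos by (simp add: field_simps)
  have HI: "(decoh_integrand \<alpha> g0 lam \<kappa>0 \<omega> ?n d\<tau> b b' has_integral Lc \<kappa>0 ?t ?c ?c') UNIV"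
    unfolding link Lc_def by (rule fcore_has_integral[OF pos(4) cc])
  show "decoh_factor \<alpha> g0 lam \<kappa>0 \<omega> k l d\<tau> b b' = 0"
    unfolding decoh_factor_def using integral_unique[OF HI] Lc_zero[OF pos(4) cc tbig] by simp
qed

end
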